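(* In the general setting of the context, for every $h\in\{0,1,\dots,L-1\}$, $$\mathbb{P}\Big(P_h>\frac{1+2\theta_h}{1-\theta_h}P^*\Big)\le\exp\Big(-\frac{\epsilon^2}{6\gamma}\Big).$$
   Context: General setting. Let $m,k,n$ be positive integers and $b\in\mathbb{R}^m_{++}$. Let $\mathcal G$ be the set of proper, concave, upper semicontinuous functions $f:\mathbb{R}^k\to[-\infty,\infty)$ with bounded superlevel sets such that $\mathrm{dom} f\subset\mathbb{R}^k_+$ and $f(0)=0$. Let $f_1,\dots,f_n\in\mathcal G$ and $A_1,\dots,A_n\in\mathbb{R}_+^{m\times k}$. Let $P^*=\sup\{\sum_{t=1}^n f_t(x_t): x_t\in\mathbb{R}^k,\ \sum_{t=1}^n A_tx_t\le b\}$ and assume $P^*>0$. Let $\gamma>0$ satisfy, for every $t\in[n]$: $(A_tx)_i/b_i\le\gamma$ for all $i\in[m]$ and all $x$ with $f_t(x)\ge0$, and $f_t(x)\le\gamma P^*$ for all $x\in\mathrm{dom} f_t$. Let $\epsilon\in(0,1)$ be such that $L=\log_2(1/\epsilon)$ and $n\epsilon$ are integers. Let $\sigma$ be a uniformly random permutation of $[n]$; probabilities are over $\sigma$. For $h\in\{0,\dots,L-1\}$ let $\theta_h=2^{-(h+1)/2}\epsilon^{1/2}$ and $$P_h=\sup\Big\{\tfrac{1}{2^h\epsilon(1-\theta_h)}\sum_{t=1}^{2^hn\epsilon}f_{\sigma(t)}(x_t)\ :\ x_t\in\mathbb{R}^k,\ \tfrac{1}{2^h\epsilon(1+\theta_h)}\sum_{t=1}^{2^hn\epsilon}A_{\sigma(t)}x_t\le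 b\Big\}.$$ *)

theory Defs
  imports "HOL-Analysis.Analysis" "HOL-Probability.Probability"
begin

text \<open>Functions R^k -> [-infinity, infinity) are modelled as ereal-valued functions
  that never take the value +infinity.\<close>

definition edom :: "('a \<Rightarrow> ereal) \<Rightarrow> 'a set" where
  "edom f = {x. f x \<noteq> -\<infinity>}"

definition proper_concave_fun :: "('a::real_vector \<Rightarrow> ereal) \<Rightarrow> bool" where
  "proper_concave_fun f \<longleftrightarrow> (\<forall>x. f x \<noteq> \<infinity>) \<and> (\<exists>x. f x \<noteq> -\<infinity>)"

definition concave_efun :: "('a::real_vector \<Rightarrow> ereal) \<Rightarrow> bool" where
  "concave_efun f \<longleftrightarrow> convex {(x, t::real). ereal t \<le> f x}"

definition usc_efun :: "('a::topological_space \<Rightarrow> ereal) \<Rightarrow> bool" where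
  "usc_efun f \<longleftrightarrow> (\<forall>x. Limsup (at x) f \<le> f x)"

definition bounded_superlevel :: "('a::metric_space \<Rightarrow> ereal) \<Rightarrow> bool" where
  "bounded_superlevel f \<longleftrightarrow> (\<forall>t::real. bounded {x. ereal t \<le> f x})"

definition classG :: "(real^'k \<Rightarrow> ereal) \<Rightarrow> bool" where
  "classG f \<longleftrightarrow> proper_concave_fun f \<and> concave_efun f \<and> usc_efun f \<and> bounded_superlevel f
     \<and> edom f \<subseteq> {x. \<forall>j. 0 \<le> x $ j} \<and> f 0 = 0"

definition Pstar :: "nat \<Rightarrow> (nat \<Rightarrow> real^'k \<Rightarrow> ereal) \<Rightarrow> (nat \<Rightarrow> real^'k^'m) \<Rightarrow> real^'m \<Rightarrow> ereal" where
  "Pstar n f A b = Sup {(\<Sum>t\<in>{1..n}. f t (x t)) | x :: nat \<Rightarrow> real^'k.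
      \<forall>i. (\<Sum>t\<in>{1..n}. A t *v x t) $ i \<le> b $ i}"

definition theta :: "real \<Rightarrow> nat \<Rightarrow> real" where
  "theta \<epsilon> h = 2 powr (- (real h + 1) / 2) * sqrt \<epsilon>"

text \<open>P_h for a permutation sigma; the number of terms is 2^h n epsilon (an integer).\<close>
definition Ph :: "real \<Rightarrow> nat \<Rightarrow> nat \<Rightarrow> (nat \<Rightarrow> real^'k \<Rightarrow> ereal) \<Rightarrow> (nat \<Rightarrow> real^'k^'m)
      \<Rightarrow> real^'m \<Rightarrow> (nat \<Rightarrow> nat) \<Rightarrow> ereal" where
  "Ph \<epsilon> h n f A b \<sigma> =
    (let N = nat \<lfloor>2 ^ h * real n * \<epsilon>\<rfloor>; \<theta> = theta \<epsilon> h in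
     Sup {ereal (1 / (2 ^ h * \<epsilon> * (1 - \<theta>))) * (\<Sum>t\<in>{1..N}. f (\<sigma> t) (x t)) | x :: nat \<Rightarrow> real^'k.
       \<forall>i. (1 / (2 ^ h * \<epsilon> * (1 + \<theta>))) * (\<Sum>t\<in>{1..N}. A (\<sigma> t) *v x t) $ i \<le> b $ i})"

end

theory Submission
  imports Defs
begin



lemma bern_gen:
  fixes r e :: real
  assumes "0 \<le> r" "0 \<le> r + e"
  shows "r ^ Suc k + real (Suc k) * r ^ k * e \<le> (r + e) ^ Suc k"
proof (induction k)
  case 0
  then show ?case by simp
next
  case (Suc k)
  have "(r + e) ^ Suc (Suc k) = (r + e) * (r + e) ^ Suc k" by simp
  also have "\<dots> \<ge> (r + e) * (r ^ Suc k + real (Suc k) * r ^ k * e)"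
    using Suc assms(2) by (simp add: mult_left_mono)
  also have "(r + e) * (r ^ Suc k + real (Suc k) * r ^ k * e)
     = r ^ Suc (Suc k) + real (Suc (Suc k)) * r ^ Suc k * e + real (Suc k) * r ^ k * e^2"
    by (simp add: algebra_simps power2_eq_square)
  also have "\<dots> \<ge> r ^ Suc (Suc k) + real (Suc (Suc k)) * r ^ Suc k * e"
    using assms(1) by simp
  finally show ?case by linarith
qed

lemma mac_arith:
  fixes r q :: real and n k :: nat
  assumes "1 \<le> n" "0 \<le> r" "0 \<le> q"
  shows "real (n choose Suc k) * r ^ Suc k + q * real (n choose k) * r ^ k
     \<le> real (Suc n choose Suc k) * ((real n * r + q) / (real n + 1)) ^ Suc k"
proof (cases "k \<le> n")
  case False
  then have "n choose k = 0" "n choose Suc k = 0" "Suc n choose Suc k = 0" by auto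
  note z = this
  show ?thesis unfolding z using assms by simp
next
  case True
  define K where "K = real (Suc n choose Suc k)"
  have i1: "(real n + 1) * real (n choose k) = real (Suc k) * K"
    unfolding K_def using Suc_times_binomial[of k n] by (metis of_nat_Suc of_nat_mult add.commute)
  have i2: "(real n + 1) * real (n choose Suc k) = (real n - real k) * K"
  proof -
    have "real ((n - k) * (Suc n choose Suc k)) = real (Suc n * (n choose Suc k))"
      by (metis binomial_absorb_comp diff_Suc_Suc diff_Suc_1)
    then have "real (n - k) * K = (real n + 1) * real (n choose Suc k)"
      unfolding K_def of_nat_mult by simp
    then show ?thesis using True by (simp add: of_nat_diff)
  qed
  define e where "e = (q - r) / (real n + 1)"
  have m: "(real n * r + q) / (real n + 1) = r + e"
    unfolding e_def by (simp add: field_simps)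
  have pos: "real n + 1 > 0" by simp
  have "real (n choose Suc k) * r ^ Suc k + q * real (n choose k) * r ^ k
     = ((real n + 1) * real (n choose Suc k) * r ^ Suc k + q * ((real n + 1) * real (n choose k)) * r ^ k) / (real n + 1)"
    using pos by (simp add: field_simps)
  also have "\<dots> = ((real n - real k) * K * r ^ Suc k + q * (real (Suc k) * K) * r ^ k) / (real n + 1)"
    using i1 i2 by simp
  also have "\<dots> = K * (r ^ Suc k + real (Suc k) * r ^ k * e)"
    unfolding e_def using pos by (simp add: field_simps)
  also have "\<dots> \<le> K * (r + e) ^ Suc k"
    apply (rule mult_left_mono)
     apply (rule bern_gen)
    using assms m[symmetric] by (auto simp: K_def intro!: divide_nonneg_pos)
  finally show ?thesis unfolding K_def m .
qed

definition esym :: "(nat \<Rightarrow> real) \<Rightarrow> nat set \<Rightarrow> nat \<Rightarrow> real" where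
  "esym w S k = (\<Sum>T\<in>{T. T \<subseteq> S \<and> card T = k}. \<Prod>i\<in>T. w i)"

lemma esym_0: "finite S \<Longrightarrow> esym w S 0 = 1"
proof -
  assume "finite S"
  then have "{T. T \<subseteq> S \<and> card T = 0} = {{}}" by (auto dest: finite_subset)
  then show ?thesis by (simp add: esym_def)
qed

lemma esym_empty: "esym w {} (Suc k) = 0"
  by (simp add: esym_def)

lemma esym_insert:
  assumes "finite S" "i \<notin> S"
  shows "esym w (insert i S) (Suc k) = esym w S (Suc k) + w i * esym w S k"
proof -
  have eq: "{T. T \<subseteq> insert i S \<and> card T = Suc k} =
      {T. T \<subseteq> S \<and> card T = Suc k} \<union> insert i ` {T. T \<subseteq> S \<and> card T = k}"
  proof (intro equalityI subsetI)
    fix T assume "T \<in> {T. T \<subseteq> insert i S \<and> card T = Suc k}"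
    then have T: "T \<subseteq> insert i S" "card T = Suc k" by auto
    show "T \<in> {T. T \<subseteq> S \<and> card T = Suc k} \<union> insert i ` {T. T \<subseteq> S \<and> card T = k}"
    proof (cases "i \<in> T")
      case True
      have "T = insert i (T - {i})" using True by auto
      moreover have "card (T - {i}) = k" using T True by (simp add: card_Diff_singleton)
      moreover have "T - {i} \<subseteq> S" using T by auto
      ultimately show ?thesis by blast
    next
      case False
      then show ?thesis using T by auto
    qed
  next
    fix T assume "T \<in> {T. T \<subseteq> S \<and> card T = Suc k} \<union> insert i ` {T. T \<subseteq> S \<and> card T = k}"
    then show "T \<in> {T. T \<subseteq> insert i S \<and> card T = Suc k}"
  proof -
    from \<open>T \<in> _\<close> show ?thesis
      using assms by (auto) (metis card_insert_disjoint finite_subset subsetD)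
  qed
  qed
  have fin1: "finite {T. T \<subseteq> S \<and> card T = Suc k}" using assms by simp
  have fin2: "finite (insert i ` {T. T \<subseteq> S \<and> card T = k})" using assms by simp
  have disj: "{T. T \<subseteq> S \<and> card T = Suc k} \<inter> insert i ` {T. T \<subseteq> S \<and> card T = k} = {}"
    using assms by auto
  have inj: "inj_on (insert i) {T. T \<subseteq> S \<and> card T = k}"
    using assms by (auto simp: inj_on_def)
  have "esym w (insert i S) (Suc k) = esym w S (Suc k) + (\<Sum>T\<in>insert i ` {T. T \<subseteq> S \<and> card T = k}. \<Prod>j\<in>T. w j)"
    unfolding esym_def eq by (rule sum.union_disjoint[OF fin1 fin2 disj])
  also have "(\<Sum>T\<in>insert i ` {T. T \<subseteq> S \<and> card T = k}. \<Prod>j\<in>T. w j)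
      = (\<Sum>T\<in>{T. T \<subseteq> S \<and> card T = k}. \<Prod>j\<in>insert i T. w j)"
    by (rule sum.reindex[OF inj, unfolded comp_def])
  also have "\<dots> = (\<Sum>T\<in>{T. T \<subseteq> S \<and> card T = k}. w i * (\<Prod>j\<in>T. w j))"
    apply (rule sum.cong[OF refl])
    using assms by (subst prod.insert) (auto dest: finite_subset)
  also have "\<dots> = w i * esym w S k" by (simp add: esym_def sum_distrib_left)
  finally show ?thesis .
qed

lemma esym_nonneg: "(\<And>i. i \<in> S \<Longrightarrow> 0 \<le> w i) \<Longrightarrow> 0 \<le> esym w S k"
  unfolding esym_def by (intro sum_nonneg prod_nonneg) auto

lemma maclaurin:
  assumes "finite S" "\<And>i. i \<in> S \<Longrightarrow> 0 \<le> w i"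
  shows "esym w S k \<le> real (card S choose k) * (sum w S / real (card S)) ^ k"
  using assms
proof (induction S arbitrary: k rule: finite_induct)
  case empty
  then show ?case by (cases k) (auto simp: esym_0 esym_empty)
next
  case (insert i S)
  show ?case
  proof (cases k)
    case 0
    then show ?thesis using insert by (simp add: esym_0)
  next
    case (Suc k')
    show ?thesis
    proof (cases "S = {}")
      case True
      then show ?thesis using Suc by (cases k') (auto simp: esym_insert esym_empty esym_0)
    next
      case False
      define n where "n = card S"
      define r where "r = sum w S / real n"
      have n1: "1 \<le> n" using False insert(1) n_def by (simp add: Suc_leI card_gt_0_iff)
      have r0: "0 \<le> r" unfolding r_def using insert(4) by (auto intro!: sum_nonneg divide_nonneg_nonneg)
      have sw: "sum w S = real n * r" unfolding r_def using n1 by simp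
      have "esym w (insert i S) k = esym w S (Suc k') + w i * esym w S k'"
        using Suc insert(1,2) esym_insert by simp
      also have "\<dots> \<le> real (n choose Suc k') * r ^ Suc k' + w i * (real (n choose k') * r ^ k')"
        apply (rule add_mono)
        using insert(3)[of "Suc k'"] insert(4) apply (simp add: n_def r_def)
        apply (rule mult_left_mono)
        using insert(3)[of k'] insert(4) by (auto simp: n_def r_def)
      also have "\<dots> \<le> real (Suc n choose Suc k') * ((real n * r + w i) / (real n + 1)) ^ Suc k'"
        using mac_arith[OF n1 r0, of "w i" k'] insert(4) by (simp add: algebra_simps)
      also have "\<dots> = real (card (insert i S) choose k) * (sum w (insert i S) / real (card (insert i S))) ^ k"
        using insert(1,2) Suc sw by (simp add: n_def add.commute)
      finally show ?thesis .
    qed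
  qed
qed




lemma exists_perm_image:
  assumes "finite A" "T0 \<subseteq> A" "T \<subseteq> A" "card T0 = card T"
  shows "\<exists>\<pi>. \<pi> permutes A \<and> \<pi> ` T0 = T"
proof -
  have f0: "finite T0" "finite T" using assms finite_subset by auto
  obtain h1 where h1: "bij_betw h1 T0 T" using finite_same_card_bij[OF f0 assms(4)] by blast
  have "card (A - T0) = card (A - T)" using assms f0 by (simp add: card_Diff_subset)
  then obtain h2 where h2: "bij_betw h2 (A - T0) (A - T)"
    using finite_same_card_bij[of "A - T0" "A - T"] assms by blast
  define \<pi> where "\<pi> x = (if x \<in> T0 then h1 x else if x \<in> A then h2 x else x)" for x
  have b1: "bij_betw \<pi> T0 T" using h1 by (rule bij_betw_cong[THEN iffD1, rotated]) (simp add: \<pi>_def)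
  have b2: "bij_betw \<pi> (A - T0) (A - T)" using h2 by (rule bij_betw_cong[THEN iffD1, rotated]) (simp add: \<pi>_def)
  have "bij_betw \<pi> (T0 \<union> (A - T0)) (T \<union> (A - T))"
    by (rule bij_betw_combine[OF b1 b2]) auto
  moreover have "T0 \<union> (A - T0) = A" "T \<union> (A - T) = A" using assms by auto
  ultimately have "bij_betw \<pi> A A" by simp
  then have "\<pi> permutes A" by (rule bij_imp_permutes) (use assms(2) in \<open>auto simp: \<pi>_def\<close>)
  moreover have "\<pi> ` T0 = T" using b1 by (simp add: bij_betw_def)
  ultimately show ?thesis by blast
qed

lemma perm_fiber_card:
  assumes "finite A" "T0 \<subseteq> A" "T \<subseteq> A" "card T0 = card T" "B \<subseteq> A"
  shows "card {\<sigma>. \<sigma> permutes A \<and> \<sigma> ` B = T0} = card {\<sigma>. \<sigma> permutes A \<and> \<sigma> ` B = T}"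
proof -
  obtain \<pi> where \<pi>: "\<pi> permutes A" "\<pi> ` T0 = T" using exists_perm_image[OF assms(1-4)] by blast
  have pi': "inv \<pi> permutes A" using \<pi>(1) by (rule permutes_inv)
  have "inv \<pi> ` T = T0" using \<pi> by (metis image_inv_f_f permutes_inj)
  show ?thesis
  proof (rule bij_betw_same_card[of "\<lambda>\<sigma>. \<pi> \<circ> \<sigma>"], rule bij_betw_byWitness[where f'="\<lambda>\<sigma>. inv \<pi> \<circ> \<sigma>"])
    show "\<forall>a\<in>{\<sigma>. \<sigma> permutes A \<and> \<sigma> ` B = T0}. inv \<pi> \<circ> (\<pi> \<circ> a) = a"
      using \<pi>(1) by (simp add: o_assoc permutes_inv_o(2))
    show "\<forall>a\<in>{\<sigma>. \<sigma> permutes A \<and> \<sigma> ` B = T}. \<pi> \<circ> (inv \<pi> \<circ> a) = a"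
      using \<pi>(1) by (simp add: o_assoc permutes_inv_o(1))
    show "(\<circ>) \<pi> ` {\<sigma>. \<sigma> permutes A \<and> \<sigma> ` B = T0} \<subseteq> {\<sigma>. \<sigma> permutes A \<and> \<sigma> ` B = T}"
      using \<pi> by (auto intro: permutes_compose simp: image_comp[symmetric])
    show "(\<circ>) (inv \<pi>) ` {\<sigma>. \<sigma> permutes A \<and> \<sigma> ` B = T} \<subseteq> {\<sigma>. \<sigma> permutes A \<and> \<sigma> ` B = T0}"
      using pi' \<open>inv \<pi> ` T = T0\<close> by (auto intro: permutes_compose simp: image_comp[symmetric])
  qed
qed

lemma perm_prod_bound:
  fixes w :: "nat \<Rightarrow> real"
  assumes "N \<le> n" "\<And>i. i \<in> {1..n} \<Longrightarrow> 0 \<le> w i"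
  shows "(\<Sum>\<sigma>\<in>{\<sigma>. \<sigma> permutes {1..n}}. \<Prod>t\<in>{1..N}. w (\<sigma> t))
      \<le> real (card {\<sigma>. \<sigma> permutes {1..n}}) * (sum w {1..n} / real n) ^ N"
proof -
  define P where "P = {\<sigma>. \<sigma> permutes {1..n::nat}}"
  define \<T> where "\<T> = {T. T \<subseteq> {1..n::nat} \<and> card T = N}"
  define c where "c T = card {\<sigma>\<in>P. \<sigma> ` {1..N} = T}" for T
  have finP: "finite P" unfolding P_def by (rule finite_permutations) simp
  have finT: "finite \<T>" unfolding \<T>_def by (rule finite_subset[of _ "Pow {1..n}"]) auto
  have img: "(\<lambda>\<sigma>. \<sigma> ` {1..N}) ` P \<subseteq> \<T>"
  proof
    fix T assume "T \<in> (\<lambda>\<sigma>. \<sigma> ` {1..N}) ` P"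
    then obtain \<sigma> where s: "\<sigma> permutes {1..n}" "T = \<sigma> ` {1..N}" unfolding P_def by auto
    have "inj_on \<sigma> {1..N}" using s(1) permutes_inj by (metis inj_on_subset subset_UNIV)
    then have "card T = N" using s by (simp add: card_image)
    moreover have "T \<subseteq> {1..n}" using s assms(1) permutes_image[OF s(1)] by auto
    ultimately show "T \<in> \<T>" unfolding \<T>_def by simp
  qed
  have cconst: "c T = c {1..N}" if "T \<in> \<T>" for T
  proof -
    have "T \<subseteq> {1..n}" "card T = N" using that unfolding \<T>_def by auto
    then have "card {\<sigma>. \<sigma> permutes {1..n} \<and> \<sigma> ` {1..N} = {1..N}} = card {\<sigma>. \<sigma> permutes {1..n} \<and> \<sigma> ` {1..N} = T}"
      using perm_fiber_card[of "{1..n}" "{1..N}" T "{1..N}"] assms(1) by simp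
    then show ?thesis unfolding c_def P_def by simp
  qed
  have "(\<Sum>\<sigma>\<in>P. \<Prod>t\<in>{1..N}. w (\<sigma> t)) = (\<Sum>\<sigma>\<in>P. \<Prod>i\<in>\<sigma> ` {1..N}. w i)"
  proof (rule sum.cong[OF refl])
    fix \<sigma> assume "\<sigma> \<in> P"
    then have "\<sigma> permutes {1..n}" unfolding P_def by blast
    then have "inj \<sigma>" by (rule permutes_inj)
    then have "inj_on \<sigma> {1..N}" by (rule inj_on_subset) simp
    then show "(\<Prod>t\<in>{1..N}. w (\<sigma> t)) = (\<Prod>i\<in>\<sigma> ` {1..N}. w i)" by (simp add: prod.reindex)
  qed
  also have "\<dots> = (\<Sum>T\<in>\<T>. \<Sum>\<sigma>\<in>{\<sigma>\<in>P. \<sigma> ` {1..N} = T}. \<Prod>i\<in>\<sigma> ` {1..N}. w i)"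
    by (rule sum.group[OF finP finT img, symmetric])
  also have "\<dots> = (\<Sum>T\<in>\<T>. real (c T) * (\<Prod>i\<in>T. w i))"
    unfolding c_def by (intro sum.cong refl) simp
  also have "\<dots> = real (c {1..N}) * esym w {1..n} N"
    unfolding esym_def \<T>_def[symmetric] sum_distrib_left
    by (intro sum.cong refl) (simp add: cconst)
  finally have e1: "(\<Sum>\<sigma>\<in>P. \<Prod>t\<in>{1..N}. w (\<sigma> t)) = real (c {1..N}) * esym w {1..n} N" .
  have "(\<Sum>T\<in>\<T>. c T) = (\<Sum>T\<in>\<T>. \<Sum>\<sigma>\<in>{\<sigma>\<in>P. \<sigma> ` {1..N} = T}. (1::nat))"
    unfolding c_def by (simp only: card_eq_sum)
  also have "\<dots> = (\<Sum>\<sigma>\<in>P. 1)" by (rule sum.group[OF finP finT img])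
  also have "\<dots> = card P" by (simp only: card_eq_sum)
  finally have "card P = (\<Sum>T\<in>\<T>. c T)" by simp
  also have "\<dots> = card \<T> * c {1..N}" using cconst by simp
  also have "card \<T> = n choose N" unfolding \<T>_def using n_subsets[of "{1..n}" N] by simp
  finally have cP: "card P = (n choose N) * c {1..N}" .
  have pos: "0 < real (n choose N)" using assms(1) by simp
  have "real (c {1..N}) * esym w {1..n} N \<le> real (c {1..N}) * (real (n choose N) * (sum w {1..n} / real n) ^ N)"
    using maclaurin[of "{1..n}" w N] assms by (intro mult_left_mono) auto
  also have "\<dots> = real (card P) * (sum w {1..n} / real n) ^ N" using cP by simp
  finally show ?thesis using e1 unfolding P_def by simp
qed




lemma ln_lower_pade:
  fixes x :: real assumes "0 \<le> x"
  shows "2 * x / (2 + x) \<le> ln (1 + x)"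
proof -
  define h where "h t = ln (1 + t) - 2 * t / (2 + t)" for t :: real
  have "h 0 \<le> h x"
  proof (rule DERIV_nonneg_imp_increasing_open[OF assms])
    fix t :: real assume t: "0 < t" "t < x"
    have "DERIV h t :> (1 / (1 + t) - (2 * (2 + t) - 2 * t) / (2 + t)^2)"
      unfolding h_def using t
      by (auto intro!: derivative_eq_intros simp: power2_eq_square)
    moreover have "(2 * (2 + t) - 2 * t) / (2 + t)^2 \<le> 1 / (1 + t)"
    proof -
      have "4 * (1 + t) \<le> (2 + t)^2" using t by (simp add: power2_eq_square algebra_simps)
      then show ?thesis using t by (simp add: field_simps)
    qed
    ultimately show "\<exists>y. DERIV h t :> y \<and> 0 \<le> y" by auto
  next
    show "continuous_on {0..x} h" unfolding h_def
      by (intro continuous_intros) (auto)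
  qed
  then show ?thesis by (simp add: h_def)
qed

lemma chernoff_key:
  fixes x :: real assumes "0 \<le> x" "x \<le> 1"
  shows "x - (1 + x) * ln (1 + x) \<le> - (x^2 / 3)"
proof -
  have "(1 + x) * (2 * x / (2 + x)) \<le> (1 + x) * ln (1 + x)"
    using ln_lower_pade[OF assms(1)] assms by (intro mult_left_mono) auto
  moreover have "x + x^2 / 3 \<le> (1 + x) * (2 * x / (2 + x))"
  proof -
    have "(x + x^2/3) * (2 + x) \<le> (1 + x) * (2 * x)"
      using assms by (simp add: algebra_simps power2_eq_square)
        (metis mult_left_le mult_nonneg_nonneg assms(1) assms(2) mult.assoc)
    then show ?thesis using assms by (simp add: field_simps)
  qed
  ultimately show ?thesis by linarith
qed

lemma exp_convex_bound:
  fixes l a c :: real assumes "0 \<le> c" "c \<le> a" "0 < a"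
  shows "exp (l * c) \<le> 1 + c / a * (exp (l * a) - 1)"
proof -
  have "convex_on UNIV exp" by (rule exp_convex)
  then have "exp ((1 - c/a) *\<^sub>R 0 + (c/a) *\<^sub>R (l * a)) \<le> (1 - c/a) * exp 0 + (c/a) * exp (l * a)"
    using assms by (intro convex_onD) auto
  moreover have "(1 - c/a) *\<^sub>R 0 + (c/a) *\<^sub>R (l * a) = l * c" using assms by simp
  ultimately show ?thesis by (simp add: algebra_simps)
qed




lemma chernoff_perm:
  fixes c :: "nat \<Rightarrow> real" and a M \<delta> \<mu> :: real
  assumes Nn: "N \<le> n" and n1: "1 \<le> n" and cb: "\<And>i. i \<in> {1..n} \<Longrightarrow> 0 \<le> c i \<and> c i \<le> a"
    and a0: "0 < a" and mu: "\<mu> = real N / real n * sum c {1..n}" and muM: "\<mu> \<le> M"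
    and d0: "0 < \<delta>" and dM: "\<delta> \<le> M"
  shows "real (card {\<sigma>. \<sigma> permutes {1..n} \<and> \<mu> + \<delta> < (\<Sum>t\<in>{1..N}. c (\<sigma> t))})
     \<le> real (card {\<sigma>. \<sigma> permutes {1..n}}) * exp (- (\<delta>^2 / (3 * a * M)))"
proof -
  define P where "P = {\<sigma>. \<sigma> permutes {1..n::nat}}"
  define E where "E = {\<sigma>. \<sigma> permutes {1..n} \<and> \<mu> + \<delta> < (\<Sum>t\<in>{1..N}. c (\<sigma> t))}"
  define X where "X \<sigma> = (\<Sum>t\<in>{1..N}. c (\<sigma> t))" for \<sigma> :: "nat \<Rightarrow> nat"
  have M0: "0 < M" using d0 dM by linarith
  define x where "x = \<delta> / M"
  have x0: "0 < x" and x1: "x \<le> 1" using d0 dM M0 by (auto simp: x_def)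
  define l where "l = ln (1 + x) / a"
  have l0: "0 < l" unfolding l_def using x0 a0 by simp
  have ela: "exp (l * a) = 1 + x" unfolding l_def using a0 x0 by simp
  define w where "w i = exp (l * c i)" for i
  have finP: "finite P" unfolding P_def by (rule finite_permutations) simp
  have EP: "E \<subseteq> P" unfolding E_def P_def by blast
  define C where "C = sum c {1..n}"
  define y where "y = x * C / (a * real n)"
  have C0: "0 \<le> C" unfolding C_def using cb by (auto intro!: sum_nonneg)
  have y0: "0 \<le> y" unfolding y_def using C0 x0 a0 n1 by auto
  have "sum w {1..n} \<le> (\<Sum>i\<in>{1..n}. 1 + c i / a * x)"
    unfolding w_def using exp_convex_bound[of _ a l] cb a0 ela by (intro sum_mono) auto
  also have "\<dots> = real n + x * C / a" unfolding C_def
    by (simp add: sum.distrib sum_divide_distrib[symmetric] sum_distrib_right[symmetric] sum_distrib_left[symmetric] algebra_simps)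
  finally have Wb: "sum w {1..n} / real n \<le> 1 + y" unfolding y_def using n1 by (simp add: field_simps)
  have W0: "0 \<le> sum w {1..n} / real n" unfolding w_def by (auto intro!: sum_nonneg divide_nonneg_nonneg)
  have "(\<Sum>\<sigma>\<in>P. exp (l * X \<sigma>)) = (\<Sum>\<sigma>\<in>P. \<Prod>t\<in>{1..N}. w (\<sigma> t))"
    unfolding X_def w_def by (simp add: sum_distrib_left exp_sum)
  also have "\<dots> \<le> real (card P) * (sum w {1..n} / real n) ^ N"
    unfolding P_def by (rule perm_prod_bound[OF Nn]) (simp add: w_def)
  also have "\<dots> \<le> real (card P) * (1 + y) ^ N"
    by (intro mult_left_mono power_mono Wb W0) simp
  also have "(1 + y) ^ N \<le> exp y ^ N"
    using y0 by (intro power_mono) (auto simp: add.commute exp_ge_add_one_self_aux)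
  also have "exp y ^ N = exp (x * \<mu> / a)"
    unfolding y_def mu C_def using a0 n1 by (simp add: exp_of_nat_mult[symmetric] field_simps)
  finally have S: "(\<Sum>\<sigma>\<in>P. exp (l * X \<sigma>)) \<le> real (card P) * exp (x * \<mu> / a)"
    by (simp add: mult_left_mono)
  have "real (card E) * exp (l * (\<mu> + \<delta>)) = (\<Sum>\<sigma>\<in>E. exp (l * (\<mu> + \<delta>)))" by simp
  also have "\<dots> \<le> (\<Sum>\<sigma>\<in>E. exp (l * X \<sigma>))"
    unfolding E_def X_def using l0 by (intro sum_mono) auto
  also have "\<dots> \<le> (\<Sum>\<sigma>\<in>P. exp (l * X \<sigma>))"
    by (rule sum_mono2[OF finP EP]) auto
  finally have "real (card E) * exp (l * (\<mu> + \<delta>)) \<le> real (card P) * exp (x * \<mu> / a)"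
    using S by linarith
  then have cE: "real (card E) \<le> real (card P) * exp (x * \<mu> / a - l * (\<mu> + \<delta>))"
    by (simp add: exp_diff field_simps)
  have "x * \<mu> / a - l * (\<mu> + \<delta>) = (\<mu> / a) * (x - ln (1 + x)) - ln (1 + x) * x * M / a"
    unfolding l_def x_def using M0 a0 by (simp add: field_simps)
  also have "\<dots> \<le> (M / a) * (x - ln (1 + x)) - ln (1 + x) * x * M / a"
    using muM a0 ln_add_one_self_le_self[of x] x0 by (intro diff_right_mono mult_right_mono divide_right_mono) auto
  also have "\<dots> = (M / a) * (x - (1 + x) * ln (1 + x))" by (simp add: algebra_simps)
  also have "\<dots> \<le> (M / a) * (- (x^2 / 3))"
    using chernoff_key[of x] x0 x1 M0 a0 by (intro mult_left_mono) auto
  also have "\<dots> = - (\<delta>^2 / (3 * a * M))" unfolding x_def using M0 a0 by (simp add: field_simps power2_eq_square)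
  finally have "exp (x * \<mu> / a - l * (\<mu> + \<delta>)) \<le> exp (- (\<delta>^2 / (3 * a * M)))" by simp
  with cE have "real (card E) \<le> real (card P) * exp (- (\<delta>^2 / (3 * a * M)))"
    by (meson mult_left_mono of_nat_0_le_iff order_trans)
  then show ?thesis unfolding E_def P_def X_def .
qed




lemma ereal_sum_Minfty:
  fixes F :: "'a \<Rightarrow> ereal"
  assumes "finite T" "\<forall>t\<in>T. F t \<noteq> \<infinity>" "i \<in> T" "F i = -\<infinity>"
  shows "sum F T = -\<infinity>"
  using assms
proof (induction T rule: finite_induct)
  case empty then show ?case by simp
next
  case (insert x T)
  show ?case
  proof (cases "x = i")
    case True
    have "sum F T \<noteq> \<infinity>" using insert by (simp add: sum_Pinfty)
    then show ?thesis using True insert by simp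
  next
    case False
    then have "sum F T = -\<infinity>" using insert by auto
    then show ?thesis using insert by simp
  qed
qed

lemma ereal_sum_finite_terms:
  fixes F :: "'a \<Rightarrow> ereal"
  assumes "finite T" "\<forall>t\<in>T. F t \<noteq> \<infinity>" "sum F T \<noteq> -\<infinity>" "t \<in> T"
  shows "F t = ereal (real_of_ereal (F t))"
proof -
  have "F t \<noteq> -\<infinity>" using ereal_sum_Minfty[OF assms(1,2,4)] assms(3) by blast
  moreover have "F t \<noteq> \<infinity>" using assms by auto
  ultimately show ?thesis by (cases "F t") auto
qed

lemma concave_step:
  fixes g :: "'a::real_vector \<Rightarrow> ereal"
  assumes "concave_efun g" "ereal r1 \<le> g x1" "ereal r2 \<le> g x2" "0 \<le> u" "0 \<le> v" "u + v = 1"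
  shows "ereal (u * r1 + v * r2) \<le> g (u *\<^sub>R x1 + v *\<^sub>R x2)"
proof -
  have "u *\<^sub>R (x1, r1) + v *\<^sub>R (x2, r2) \<in> {(x, t::real). ereal t \<le> g x}"
    using assms unfolding concave_efun_def by (intro convexD) auto
  then show ?thesis by simp
qed




lemma duality:
  fixes f :: "nat \<Rightarrow> real^'k \<Rightarrow> ereal" and A :: "nat \<Rightarrow> real^'k^'m" and b :: "real^'m" and Ps :: real
  assumes fG: "\<forall>t\<in>{1..n}. classG (f t)" and bpos: "\<forall>i. b $ i > 0" and PS: "Pstar n f A b = ereal Ps"
  shows "\<exists>p::real^'m. (\<forall>i. 0 \<le> p $ i) \<and>
     (\<forall>x. (\<Sum>t\<in>{1..n}. f t (x t)) \<le> ereal (Ps + inner p ((\<Sum>t\<in>{1..n}. A t *v x t) - b)))"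
proof -
  have fin: "\<forall>t\<in>{1..n}. \<forall>y. f t y \<noteq> \<infinity>" using fG unfolding classG_def proper_concave_fun_def by blast
  have f0: "\<forall>t\<in>{1..n}. f t 0 = 0" using fG unfolding classG_def by blast
  have conc: "\<forall>t\<in>{1..n}. concave_efun (f t)" using fG unfolding classG_def by blast
  have upper: "(\<Sum>t\<in>{1..n}. f t (x t)) \<le> ereal Ps" if "\<forall>i. (\<Sum>t\<in>{1..n}. A t *v x t) $ i \<le> b $ i" for x
  proof -
    have "(\<Sum>t\<in>{1..n}. f t (x t)) \<le> Pstar n f A b"
      unfolding Pstar_def using that by (intro Sup_upper) blast
    then show ?thesis using PS by simp
  qed
  have sum0: "(\<Sum>t\<in>{1..n}. f t ((\<lambda>_. 0) t)) = 0" using f0 by simp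
  have Ps0: "0 \<le> Ps" using upper[of "\<lambda>_. 0"] sum0 bpos by (simp add: less_imp_le)
  define S where "S = {z::((real^'m) \<times> real). \<exists>x. (\<forall>i. (\<Sum>t\<in>{1..n}. A t *v x t) $ i \<le> fst z $ i)
      \<and> ereal (snd z) < (\<Sum>t\<in>{1..n}. f t (x t))}"
  have mem0: "(u, r) \<in> S" if "\<forall>i. 0 \<le> u $ i" "r < 0" for u r
    unfolding S_def using that sum0 by (intro CollectI exI[of _ "\<lambda>_. 0"]) simp
  have convS: "convex S"
  proof (rule convexI)
    fix z1 z2 :: "(real^'m) \<times> real" and u v :: real
    assume z1: "z1 \<in> S" and z2: "z2 \<in> S" and uv: "0 \<le> u" "0 \<le> v" "u + v = 1"
    obtain x1 where x1: "\<forall>i. (\<Sum>t\<in>{1..n}. A t *v x1 t) $ i \<le> fst z1 $ i" "ereal (snd z1) < (\<Sum>t\<in>{1..n}. f t (x1 t))"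
      using z1 unfolding S_def by blast
    obtain x2 where x2: "\<forall>i. (\<Sum>t\<in>{1..n}. A t *v x2 t) $ i \<le> fst z2 $ i" "ereal (snd z2) < (\<Sum>t\<in>{1..n}. f t (x2 t))"
      using z2 unfolding S_def by blast
    define x where "x t = u *\<^sub>R x1 t + v *\<^sub>R x2 t" for t
    have Ax: "(\<Sum>t\<in>{1..n}. A t *v x t) = u *\<^sub>R (\<Sum>t\<in>{1..n}. A t *v x1 t) + v *\<^sub>R (\<Sum>t\<in>{1..n}. A t *v x2 t)"
      unfolding x_def by (simp add: matrix_vector_right_distrib matrix_vector_mult_scaleR sum.distrib scaleR_sum_right)
    have c1: "\<forall>i. (\<Sum>t\<in>{1..n}. A t *v x t) $ i \<le> fst (u *\<^sub>R z1 + v *\<^sub>R z2) $ i"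
    proof
      fix i
      have "(\<Sum>t\<in>{1..n}. A t *v x t) $ i = u * (\<Sum>t\<in>{1..n}. A t *v x1 t) $ i + v * (\<Sum>t\<in>{1..n}. A t *v x2 t) $ i"
        unfolding Ax by simp
      also have "\<dots> \<le> u * fst z1 $ i + v * fst z2 $ i"
        using x1(1) x2(1) uv by (intro add_mono mult_left_mono) auto
      finally show "(\<Sum>t\<in>{1..n}. A t *v x t) $ i \<le> fst (u *\<^sub>R z1 + v *\<^sub>R z2) $ i" by simp
    qed
    define \<rho>1 where "\<rho>1 t = real_of_ereal (f t (x1 t))" for t
    define \<rho>2 where "\<rho>2 t = real_of_ereal (f t (x2 t))" for t
    have ne1: "(\<Sum>t\<in>{1..n}. f t (x1 t)) \<noteq> -\<infinity>" using x1(2) by force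
    have e1: "f t (x1 t) = ereal (\<rho>1 t)" if "t \<in> {1..n}" for t
      unfolding \<rho>1_def using ereal_sum_finite_terms[of "{1..n}" "\<lambda>t. f t (x1 t)" t] ne1 fin that by auto
    have ne2: "(\<Sum>t\<in>{1..n}. f t (x2 t)) \<noteq> -\<infinity>" using x2(2) by force
    have e2: "f t (x2 t) = ereal (\<rho>2 t)" if "t \<in> {1..n}" for t
      unfolding \<rho>2_def using ereal_sum_finite_terms[of "{1..n}" "\<lambda>t. f t (x2 t)" t] ne2 fin that by auto
    have s1: "snd z1 < (\<Sum>t\<in>{1..n}. \<rho>1 t)"
      using x1(2) e1 by (simp add: sum.cong[OF refl e1])
    have s2: "snd z2 < (\<Sum>t\<in>{1..n}. \<rho>2 t)"
      using x2(2) e2 by (simp add: sum.cong[OF refl e2])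
    have "ereal (\<Sum>t\<in>{1..n}. u * \<rho>1 t + v * \<rho>2 t) = (\<Sum>t\<in>{1..n}. ereal (u * \<rho>1 t + v * \<rho>2 t))" by simp
    also have "\<dots> \<le> (\<Sum>t\<in>{1..n}. f t (x t))"
    proof (rule sum_mono)
      fix t assume t: "t \<in> {1..n}"
      show "ereal (u * \<rho>1 t + v * \<rho>2 t) \<le> f t (x t)"
        unfolding x_def using conc t e1[OF t] e2[OF t] uv by (intro concave_step) auto
    qed
    finally have s3: "ereal (u * (\<Sum>t\<in>{1..n}. \<rho>1 t) + v * (\<Sum>t\<in>{1..n}. \<rho>2 t)) \<le> (\<Sum>t\<in>{1..n}. f t (x t))"
      by (simp add: sum.distrib sum_distrib_left)
    have "u * snd z1 + v * snd z2 < u * (\<Sum>t\<in>{1..n}. \<rho>1 t) + v * (\<Sum>t\<in>{1..n}. \<rho>2 t)"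
    proof (cases "u = 0")
      case True
      then show ?thesis using uv s2 by simp
    next
      case False
      then have "u * snd z1 < u * (\<Sum>t\<in>{1..n}. \<rho>1 t)" using uv s1 by simp
      moreover have "v * snd z2 \<le> v * (\<Sum>t\<in>{1..n}. \<rho>2 t)" using uv s2 by (intro mult_left_mono) auto
      ultimately show ?thesis by linarith
    qed
    then have "ereal (u * snd z1 + v * snd z2) < ereal (u * (\<Sum>t\<in>{1..n}. \<rho>1 t) + v * (\<Sum>t\<in>{1..n}. \<rho>2 t))"
      by simp
    then have "ereal (u * snd z1 + v * snd z2) < (\<Sum>t\<in>{1..n}. f t (x t))"
      using s3 by (rule order_less_le_trans)
    then have "ereal (snd (u *\<^sub>R z1 + v *\<^sub>R z2)) < (\<Sum>t\<in>{1..n}. f t (x t))"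
      by simp
    then show "u *\<^sub>R z1 + v *\<^sub>R z2 \<in> S" unfolding S_def using c1 by blast
  qed
  define S' where "S' = (+) (- (b, Ps)) ` S"
  have convS': "convex S'" unfolding S'_def by (rule convex_translation[OF convS])
  have notin: "0 \<notin> S'"
  proof
    assume "0 \<in> S'"
    then obtain z where z: "0 = - (b, Ps) + z" "z \<in> S" unfolding S'_def by (rule imageE)
    then have "z = (b, Ps)" by (metis add_minus_cancel add.right_neutral)
    then have "(b, Ps) \<in> S" using z by simp
    then obtain x where x: "\<forall>i. (\<Sum>t\<in>{1..n}. A t *v x t) $ i \<le> b $ i" "ereal Ps < (\<Sum>t\<in>{1..n}. f t (x t))"
      unfolding S_def by (auto simp del: sum_ereal)
    then show False using upper[OF x(1)] by simp
  qed
  obtain a where a: "a \<noteq> 0" "\<forall>z\<in>S'. 0 \<le> inner a z"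
    using separating_hyperplane_set_0[OF convS' notin] by blast
  define p' where "p' = fst a"
  define q where "q = snd a"
  have sep: "0 \<le> inner p' (u - b) + q * (r - Ps)" if "(u, r) \<in> S" for u r
  proof -
    have "(u, r) - (b, Ps) \<in> S'" unfolding S'_def using that by force
    then have "0 \<le> inner a ((u, r) - (b, Ps))" using a by blast
    then show ?thesis unfolding p'_def q_def by (cases a) simp
  qed
  have bS: "\<forall>i. 0 \<le> b $ i" using bpos less_imp_le by blast
  have q0: "q \<le> 0"
  proof -
    have "0 \<le> inner p' (b - b) + q * (-1 - Ps)" using sep[OF mem0[OF bS, of "-1"]] by simp
    then have "0 \<le> q * (-1 - Ps)" by simp
    then show ?thesis using Ps0 by (simp add: zero_le_mult_iff)
  qed
  have qn0: "q \<noteq> 0"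
  proof
    assume q: "q = 0"
    have pos: "0 \<le> p' $ i" for i
    proof -
      have bj: "\<forall>j. 0 \<le> (b + axis i 1) $ j" using bS by (simp add: axis_def)
      have "0 \<le> inner p' ((b + axis i 1) - b) + q * (-1 - Ps)" using sep[OF mem0[OF bj, of "-1"]] by simp
      then show ?thesis using q by (simp add: inner_axis)
    qed
    have "0 \<le> inner p' (0 - b) + q * (-1 - Ps)" using sep[OF mem0[of 0 "-1"]] by simp
    then have "inner p' b \<le> 0" using q by simp
    then have "(\<Sum>i\<in>UNIV. p' $ i * b $ i) \<le> 0" by (simp add: inner_vec_def)
    moreover have "\<forall>i\<in>UNIV. 0 \<le> p' $ i * b $ i" using pos bS by simp
    ultimately have "\<forall>i\<in>UNIV. p' $ i * b $ i = 0"
      using sum_nonneg_eq_0_iff[of UNIV "\<lambda>i. p' $ i * b $ i"] sum_nonneg[of UNIV "\<lambda>i. p' $ i * b $ i"]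
      by (simp del: mult_eq_0_iff)
    then have "p' = 0" using bpos by (simp add: vec_eq_iff) (metis less_irrefl)
    then have "a = 0" using q unfolding p'_def q_def by (simp add: prod_eq_iff)
    then show False using a(1) by simp
  qed
  have qneg: "q < 0" using q0 qn0 by simp
  define p where "p = (- 1 / q) *\<^sub>R p'"
  have key: "r \<le> Ps + inner p (u - b)" if "(u, r) \<in> S" for u r
  proof -
    have "0 \<le> inner p' (u - b) + q * (r - Ps)" using sep[OF that] .
    then have "0 \<le> (-1/q) * (inner p' (u - b) + q * (r - Ps))" using qneg
      by (intro mult_nonneg_nonneg) auto
    also have "\<dots> = inner p (u - b) - (r - Ps)" unfolding p_def using qneg by (simp add: field_simps)
    finally show ?thesis by simp
  qed
  have pnn: "0 \<le> p $ i" for i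
  proof (rule ccontr)
    assume "\<not> 0 \<le> p $ i"
    then have neg: "p $ i < 0" by simp
    define R where "R = (Ps + 2) / (- p $ i)"
    have R0: "0 < R" unfolding R_def using neg Ps0 by (simp add: divide_pos_neg)
    have bj: "\<forall>j. 0 \<le> (b + axis i R) $ j" using bS R0 by (simp add: axis_def)
    have "-1 \<le> Ps + inner p ((b + axis i R) - b)" using key[OF mem0[OF bj, of "-1"]] by simp
    also have "inner p ((b + axis i R) - b) = p $ i * R" by (simp add: inner_axis)
    also have "p $ i * R = - (Ps + 2)" unfolding R_def using neg by simp
    finally show False by simp
  qed
  have main: "(\<Sum>t\<in>{1..n}. f t (x t)) \<le> ereal (Ps + inner p ((\<Sum>t\<in>{1..n}. A t *v x t) - b))" for x
  proof (cases "(\<Sum>t\<in>{1..n}. f t (x t))")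
    case (real v)
    have "v \<le> Ps + inner p ((\<Sum>t\<in>{1..n}. A t *v x t) - b)"
    proof (rule dense_le)
      fix r assume "r < v"
      then have "((\<Sum>t\<in>{1..n}. A t *v x t), r) \<in> S" unfolding S_def using real by auto
      then show "r \<le> Ps + inner p ((\<Sum>t\<in>{1..n}. A t *v x t) - b)" by (rule key)
    qed
    then show ?thesis using real by simp
  next
    case PInf
    then show ?thesis using fin by (simp add: sum_Pinfty)
  next
    case MInf
    then show ?thesis by simp
  qed
  show ?thesis using pnn main by blast
qed




lemma ereal_minus_le_real:
  fixes a :: ereal assumes "a - ereal q \<le> ereal r" shows "a \<le> ereal (r + q)"
  using assms by (cases a) auto

lemma ereal_minus_le_aux:
  fixes a :: ereal assumes "a \<le> ereal r" "0 \<le> q" shows "a - ereal q \<le> ereal r"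
  using assms by (cases a) auto

lemma inner_nonneg_vec:
  fixes p v :: "real^'m" assumes "\<forall>i. 0 \<le> p $ i" "\<forall>i. 0 \<le> v $ i"
  shows "0 \<le> inner p v"
  using assms unfolding inner_vec_def by (auto intro!: sum_nonneg)

lemma inner_mono_vec:
  fixes p v w :: "real^'m" assumes "\<forall>i. 0 \<le> p $ i" "\<forall>i. v $ i \<le> w $ i"
  shows "inner p v \<le> inner p w"
  using assms unfolding inner_vec_def by (auto intro!: sum_mono mult_left_mono)

lemma Amul_nonneg:
  fixes A :: "real^'k^'m" and y :: "real^'k"
  assumes "\<forall>i j. 0 \<le> A $ i $ j" "\<forall>j. 0 \<le> y $ j"
  shows "\<forall>i. 0 \<le> (A *v y) $ i"
  using assms unfolding matrix_vector_mult_def by (auto intro!: sum_nonneg)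

lemma c_exists:
  fixes f :: "nat \<Rightarrow> real^'k \<Rightarrow> ereal" and A :: "nat \<Rightarrow> real^'k^'m" and b p :: "real^'m" and Ps \<gamma> :: real
  assumes fG: "\<forall>t\<in>{1..n}. classG (f t)"
    and A_nonneg: "\<forall>t\<in>{1..n}. \<forall>i j. A t $ i $ j \<ge> 0"
    and gf: "\<forall>t\<in>{1..n}. \<forall>x\<in>edom (f t). f t x \<le> ereal \<gamma> * ereal Ps"
    and pnn: "\<forall>i. 0 \<le> p $ i"
    and dual: "\<forall>x. (\<Sum>t\<in>{1..n}. f t (x t)) \<le> ereal (Ps + inner p ((\<Sum>t\<in>{1..n}. A t *v x t) - b))"
  shows "\<exists>c. (\<forall>t\<in>{1..n}. 0 \<le> c t \<and> c t \<le> \<gamma> * Ps)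
     \<and> (\<forall>t\<in>{1..n}. \<forall>y. f t y \<le> ereal (c t + inner p (A t *v y)))
     \<and> sum c {1..n} \<le> Ps - inner p b"
proof -
  define G where "G t = (SUP y. f t y - ereal (inner p (A t *v y)))" for t
  have f0: "\<forall>t\<in>{1..n}. f t 0 = 0" using fG unfolding classG_def by blast
  have dom: "\<forall>t\<in>{1..n}. edom (f t) \<subseteq> {x. \<forall>j. 0 \<le> x $ j}" using fG unfolding classG_def by blast
  have G0: "0 \<le> G t" if "t \<in> {1..n}" for t
  proof -
    have "f t 0 - ereal (inner p (A t *v 0)) = 0" using f0 that by simp
    then show ?thesis unfolding G_def by (intro SUP_upper2[of 0]) simp_all
  qed
  have Gu: "G t \<le> ereal (\<gamma> * Ps)" if t: "t \<in> {1..n}" for t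
    unfolding G_def
  proof (rule SUP_least)
    fix y
    show "f t y - ereal (inner p (A t *v y)) \<le> ereal (\<gamma> * Ps)"
    proof (cases "y \<in> edom (f t)")
      case True
      have "\<forall>j. 0 \<le> y $ j" using subsetD[OF dom[rule_format, OF t] True] by simp
      then have "0 \<le> inner p (A t *v y)"
        using A_nonneg t pnn by (intro inner_nonneg_vec Amul_nonneg) auto
      moreover have "f t y \<le> ereal (\<gamma> * Ps)" using gf[rule_format, OF t True] by simp
      ultimately show ?thesis by (rule ereal_minus_le_aux[rotated])
    next
      case False
      then show ?thesis by (simp add: edom_def)
    qed
  qed
  define c where "c t = real_of_ereal (G t)" for t
  have Gc: "G t = ereal (c t)" if "t \<in> {1..n}" for t
    using G0[OF that] Gu[OF that] unfolding c_def by (cases "G t") auto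
  have c1: "\<forall>t\<in>{1..n}. 0 \<le> c t \<and> c t \<le> \<gamma> * Ps"
    using G0 Gu Gc by fastforce
  have c2: "\<forall>t\<in>{1..n}. \<forall>y. f t y \<le> ereal (c t + inner p (A t *v y))"
  proof (intro ballI allI)
    fix t y assume t: "t \<in> {1..n}"
    have "f t y - ereal (inner p (A t *v y)) \<le> G t" unfolding G_def by (rule SUP_upper) simp
    then show "f t y \<le> ereal (c t + inner p (A t *v y))" using Gc[OF t] by (intro ereal_minus_le_real) simp
  qed
  have c3: "sum c {1..n} \<le> Ps - inner p b + e" if e: "0 < e" for e
  proof -
    define \<eta> where "\<eta> = e / (real n + 1)"
    have \<eta>0: "0 < \<eta>" unfolding \<eta>_def using e by simp
    have "\<forall>t\<in>{1..n}. \<exists>y. ereal (c t - \<eta>) < f t y - ereal (inner p (A t *v y))"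
    proof
      fix t assume t: "t \<in> {1..n}"
      have "ereal (c t - \<eta>) < G t" using Gc[OF t] \<eta>0 by simp
      then show "\<exists>y. ereal (c t - \<eta>) < f t y - ereal (inner p (A t *v y))"
        unfolding G_def by (simp add: less_SUP_iff)
    qed
    then obtain Y where Y: "\<forall>t\<in>{1..n}. ereal (c t - \<eta>) < f t (Y t) - ereal (inner p (A t *v Y t))"
      by metis
    have Y': "ereal (c t - \<eta> + inner p (A t *v Y t)) \<le> f t (Y t)" if "t \<in> {1..n}" for t
    proof -
      have "ereal (c t - \<eta>) < f t (Y t) - ereal (inner p (A t *v Y t))" using Y that by blast
      then show ?thesis by (cases "f t (Y t)") auto
    qed
    have "ereal (\<Sum>t\<in>{1..n}. c t - \<eta> + inner p (A t *v Y t)) \<le> (\<Sum>t\<in>{1..n}. f t (Y t))"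
      unfolding sum_ereal[symmetric] by (rule sum_mono) (rule Y')
    also have "\<dots> \<le> ereal (Ps + inner p ((\<Sum>t\<in>{1..n}. A t *v Y t) - b))" using dual by blast
    finally have "(\<Sum>t\<in>{1..n}. c t - \<eta> + inner p (A t *v Y t)) \<le> Ps + inner p ((\<Sum>t\<in>{1..n}. A t *v Y t) - b)"
      by simp
    then have "sum c {1..n} - real n * \<eta> + (\<Sum>t\<in>{1..n}. inner p (A t *v Y t)) \<le> Ps + (\<Sum>t\<in>{1..n}. inner p (A t *v Y t)) - inner p b"
      by (simp add: sum.distrib sum_subtractf inner_diff_right inner_sum_right)
    then have "sum c {1..n} \<le> Ps - inner p b + real n * \<eta>" by simp
    moreover have "real n * \<eta> \<le> e" unfolding \<eta>_def using e by (simp add: field_simps)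
    ultimately show ?thesis by simp
  qed
  have "sum c {1..n} \<le> Ps - inner p b" by (rule field_le_epsilon) (rule c3)
  then show ?thesis using c1 c2 by blast
qed




theorem mainTheorem5:
  fixes n L h :: nat and \<epsilon> \<gamma> :: real
    and f :: "nat \<Rightarrow> real^'k \<Rightarrow> ereal" and A :: "nat \<Rightarrow> real^'k^'m" and b :: "real^'m"
  assumes n_pos: "n \<ge> 1"
    and b_pos: "\<forall>i. b $ i > 0"
    and fG: "\<forall>t\<in>{1..n}. classG (f t)"
    and A_nonneg: "\<forall>t\<in>{1..n}. \<forall>i j. A t $ i $ j \<ge> 0"
    and Pstar_pos: "Pstar n f A b > 0"
    and gamma_pos: "\<gamma> > 0"
    and gamma_A: "\<forall>t\<in>{1..n}. \<forall>x. f t x \<ge> 0 \<longrightarrow> (\<forall>i. (A t *v x) $ i / b $ i \<le> \<gamma>)"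
    and gamma_f: "\<forall>t\<in>{1..n}. \<forall>x\<in>edom (f t). f t x \<le> ereal \<gamma> * Pstar n f A b"
    and eps: "0 < \<epsilon>" "\<epsilon> < 1"
    and L_def: "real L = log 2 (1 / \<epsilon>)"
    and n_eps: "real n * \<epsilon> \<in> \<int>"
    and h: "h < L"
  shows "measure_pmf.prob (pmf_of_set {\<sigma>. \<sigma> permutes {1..n}})
           {\<sigma>. Ph \<epsilon> h n f A b \<sigma> >
                ereal ((1 + 2 * theta \<epsilon> h) / (1 - theta \<epsilon> h)) * Pstar n f A b}
         \<le> exp (- (\<epsilon>^2 / (6 * \<gamma>)))"
proof -
  define \<theta> where "\<theta> = theta \<epsilon> h"
  define s where "s = 2 ^ h * \<epsilon>"
  define N where "N = nat \<lfloor>2 ^ h * real n * \<epsilon>\<rfloor>"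
  define P where "P = {\<sigma>. \<sigma> permutes {1..n::nat}}"
  define K where "K = (1 + 2 * \<theta>) / (1 - \<theta>)"
  define E where "E = {\<sigma>. Ph \<epsilon> h n f A b \<sigma> > ereal K * Pstar n f A b}"
  have finP: "finite P" unfolding P_def by (rule finite_permutations) simp
  have neP: "P \<noteq> {}" unfolding P_def using permutes_id by blast
  have s0: "0 < s" unfolding s_def using eps by simp
  have th0: "0 < \<theta>" unfolding \<theta>_def theta_def using eps by simp
  have thsq: "\<theta>^2 = 2 powr (- (real h + 1)) * \<epsilon>"
  proof -
    have "\<theta>^2 = (2 powr (- (real h + 1) / 2))^2 * (sqrt \<epsilon>)^2"
      unfolding \<theta>_def theta_def by (simp add: power_mult_distrib)
    also have "(2 powr (- (real h + 1) / 2))^2 = 2 powr (- (real h + 1))"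
      by (simp add: power2_eq_square powr_add[symmetric])
    also have "(sqrt \<epsilon>)^2 = \<epsilon>" using eps by simp
    finally show ?thesis .
  qed
  have sth: "s * \<theta>^2 = \<epsilon>^2 / 2"
  proof -
    have "s * \<theta>^2 = (2 powr real h * 2 powr (- (real h + 1))) * \<epsilon>^2"
      unfolding s_def thsq by (simp add: powr_realpow power2_eq_square)
    also have "2 powr real h * 2 powr (- (real h + 1)) = 2 powr (-1)"
      by (simp add: powr_add[symmetric])
    finally show ?thesis by (simp add: powr_minus)
  qed
  have th1: "\<theta> < 1"
  proof -
    have "2 powr (- (real h + 1)) \<le> 1" using powr_mono[of "- (real h + 1)" 0 2] by simp
    then have "\<theta>^2 < 1" unfolding thsq using eps
      by (metis less_le_trans mult_le_cancel_right1 mult.commute order_less_imp_le not_le)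
    then show ?thesis using th0 by (simp add: power_less_one_iff)
  qed
  have s1: "s \<le> 1"
  proof -
    have "2 powr real L = 1 / \<epsilon>" using L_def eps by simp
    moreover have "(2::real) ^ h \<le> 2 ^ L" using h by (simp add: power_increasing)
    ultimately have "2 ^ h \<le> 1 / \<epsilon>" by (simp add: powr_realpow)
    then show ?thesis unfolding s_def using eps by (simp add: field_simps)
  qed
  obtain m where m: "real n * \<epsilon> = of_int m" using n_eps by (auto elim: Ints_cases)
  have m0: "0 \<le> m" using m eps n_pos by (metis mult_nonneg_nonneg of_int_0_le_iff of_nat_0_le_iff less_imp_le)
  have realN: "real N = s * real n"
  proof -
    have eq: "2 ^ h * real n * \<epsilon> = real_of_int (2 ^ h * m)" using m by (simp add: mult.assoc)
    have "\<lfloor>2 ^ h * real n * \<epsilon>\<rfloor> = \<lfloor>real_of_int (2 ^ h * m)\<rfloor>" by (simp only: eq)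
    then have "\<lfloor>2 ^ h * real n * \<epsilon>\<rfloor> = 2 ^ h * m" by (simp only: floor_of_int)
    then have "real N = real_of_int (2 ^ h * m)" unfolding N_def using m0 by simp
    also have "\<dots> = s * real n" unfolding s_def using m by (simp add: algebra_simps)
    finally show ?thesis .
  qed
  have Nn: "N \<le> n"
  proof -
    have "s * real n \<le> 1 * real n" using s1 by (intro mult_right_mono) auto
    then have "real N \<le> real n" using realN by simp
    then show ?thesis by simp
  qed
  have K0: "0 < K" unfolding K_def using th0 th1 by simp
  have probE: "measure_pmf.prob (pmf_of_set P) E = real (card (P \<inter> E)) / real (card P)"
    using finP neP by (simp add: measure_pmf_of_set)
  have goal_eq: "?thesis \<longleftrightarrow> measure_pmf.prob (pmf_of_set P) E \<le> exp (- (\<epsilon>^2 / (6 * \<gamma>)))"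
    unfolding P_def E_def K_def \<theta>_def by simp
  show ?thesis
  proof (cases "Pstar n f A b")
    case PInf
    have "E = {}" unfolding E_def PInf using K0 by simp
    then show ?thesis using goal_eq probE by simp
  next
    case MInf
    then show ?thesis using Pstar_pos by simp
  next
    case (real Ps)
    have Ps0: "0 < Ps" using Pstar_pos real by simp
    obtain p :: "real^'m" where pnn: "\<forall>i. 0 \<le> p $ i"
      and dual: "\<forall>x. (\<Sum>t\<in>{1..n}. f t (x t)) \<le> ereal (Ps + inner p ((\<Sum>t\<in>{1..n}. A t *v x t) - b))"
      using duality[OF fG b_pos real] by blast
    have gf: "\<forall>t\<in>{1..n}. \<forall>x\<in>edom (f t). f t x \<le> ereal \<gamma> * ereal Ps" using gamma_f real by simp
    obtain c where c1: "\<forall>t\<in>{1..n}. 0 \<le> c t \<and> c t \<le> \<gamma> * Ps"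
      and c2: "\<forall>t\<in>{1..n}. \<forall>y. f t y \<le> ereal (c t + inner p (A t *v y))"
      and c3: "sum c {1..n} \<le> Ps - inner p b"
      using c_exists[OF fG A_nonneg gf pnn dual] by blast
    define B where "B = inner p b"
    define C where "C = sum c {1..n}"
    have B0: "0 \<le> B" unfolding B_def using pnn b_pos by (intro inner_nonneg_vec) (auto simp: less_imp_le)
    have C0: "0 \<le> C" unfolding C_def using c1 by (auto intro!: sum_nonneg)
    have CB: "C \<le> Ps - B" using c3 unfolding C_def B_def .
    define X where "X \<sigma> = (\<Sum>t\<in>{1..N}. c (\<sigma> t))" for \<sigma> :: "nat \<Rightarrow> nat"
    have Phb: "Ph \<epsilon> h n f A b \<sigma> \<le> ereal ((X \<sigma> + s * (1 + \<theta>) * B) / (s * (1 - \<theta>)))" if "\<sigma> \<in> P" for \<sigma>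
    proof -
      have sig: "\<sigma> t \<in> {1..n}" if "t \<in> {1..N}" for t
      proof -
        have "\<sigma> permutes {1..n}" using \<open>\<sigma> \<in> P\<close> unfolding P_def by blast
        moreover have "t \<in> {1..n}" using that Nn by auto
        ultimately show ?thesis by (simp only: permutes_in_image)
      qed
      show ?thesis
        unfolding Ph_def Let_def N_def[symmetric] \<theta>_def[symmetric] s_def[symmetric]
      proof (rule Sup_least)
        fix z assume "z \<in> {ereal (1 / (s * (1 - \<theta>))) * (\<Sum>t\<in>{1..N}. f (\<sigma> t) (x t)) | x :: nat \<Rightarrow> real^'k.
            \<forall>i. 1 / (s * (1 + \<theta>)) * (\<Sum>t\<in>{1..N}. A (\<sigma> t) *v x t) $ i \<le> b $ i}"
        then obtain x :: "nat \<Rightarrow> real^'k" where z: "z = ereal (1 / (s * (1 - \<theta>))) * (\<Sum>t\<in>{1..N}. f (\<sigma> t) (x t))"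
          and cons: "\<forall>i. 1 / (s * (1 + \<theta>)) * (\<Sum>t\<in>{1..N}. A (\<sigma> t) *v x t) $ i \<le> b $ i" by blast
        have sp: "0 < s * (1 + \<theta>)" using s0 th0 by simp
        have cons': "\<forall>i. (\<Sum>t\<in>{1..N}. A (\<sigma> t) *v x t) $ i \<le> ((s * (1 + \<theta>)) *\<^sub>R b) $ i"
        proof
          fix i
          have "1 / (s * (1 + \<theta>)) * (\<Sum>t\<in>{1..N}. A (\<sigma> t) *v x t) $ i \<le> b $ i" using cons by blast
          then show "(\<Sum>t\<in>{1..N}. A (\<sigma> t) *v x t) $ i \<le> ((s * (1 + \<theta>)) *\<^sub>R b) $ i"
            using sp by (simp add: field_simps)
        qed
        have "(\<Sum>t\<in>{1..N}. f (\<sigma> t) (x t)) \<le> (\<Sum>t\<in>{1..N}. ereal (c (\<sigma> t) + inner p (A (\<sigma> t) *v x t)))"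
          using c2 sig by (intro sum_mono) blast
        also have "\<dots> = ereal (X \<sigma> + inner p (\<Sum>t\<in>{1..N}. A (\<sigma> t) *v x t))"
          unfolding X_def by (simp add: sum.distrib inner_sum_right)
        also have "\<dots> \<le> ereal (X \<sigma> + inner p ((s * (1 + \<theta>)) *\<^sub>R b))"
          using inner_mono_vec[OF pnn cons'] by simp
        also have "\<dots> = ereal (X \<sigma> + s * (1 + \<theta>) * B)" unfolding B_def by simp
        finally have le: "(\<Sum>t\<in>{1..N}. f (\<sigma> t) (x t)) \<le> ereal (X \<sigma> + s * (1 + \<theta>) * B)" .
        have "z \<le> ereal (1 / (s * (1 - \<theta>))) * ereal (X \<sigma> + s * (1 + \<theta>) * B)"
          unfolding z using s0 th1 le by (intro ereal_mult_left_mono) auto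
        then show "z \<le> ereal ((X \<sigma> + s * (1 + \<theta>) * B) / (s * (1 - \<theta>)))" by simp
      qed
    qed
    define \<mu> where "\<mu> = real N / real n * sum c {1..n}"
    define \<delta> where "\<delta> = s * \<theta> * Ps"
    define M where "M = s * Ps"
    define a where "a = \<gamma> * Ps"
    have mu: "\<mu> = s * C" unfolding \<mu>_def C_def realN using n_pos by simp
    have sub: "P \<inter> E \<subseteq> {\<sigma>. \<sigma> permutes {1..n} \<and> \<mu> + \<delta> < (\<Sum>t\<in>{1..N}. c (\<sigma> t))}"
    proof
      fix \<sigma> assume "\<sigma> \<in> P \<inter> E"
      then have sP: "\<sigma> \<in> P" and sE: "ereal K * ereal Ps < Ph \<epsilon> h n f A b \<sigma>" unfolding E_def real by auto
      have "ereal (K * Ps) < ereal ((X \<sigma> + s * (1 + \<theta>) * B) / (s * (1 - \<theta>)))"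
        using order_less_le_trans[OF _ Phb[OF sP], of "ereal (K * Ps)"] sE by simp
      then have "K * Ps < (X \<sigma> + s * (1 + \<theta>) * B) / (s * (1 - \<theta>))" by simp
      then have "s * (1 - \<theta>) * (K * Ps) < X \<sigma> + s * (1 + \<theta>) * B"
        using s0 th1 by (simp add: field_simps)
      moreover have "s * (1 - \<theta>) * (K * Ps) = s * (1 + 2 * \<theta>) * Ps" unfolding K_def using th1 by simp
      ultimately have lt: "s * (1 + 2 * \<theta>) * Ps - s * (1 + \<theta>) * B < X \<sigma>" by simp
      have "C + \<theta> * Ps \<le> (1 + 2 * \<theta>) * Ps - (1 + \<theta>) * B"
      proof -
        have "\<theta> * C \<le> \<theta> * (Ps - B)" using CB th0 by (intro mult_left_mono) auto
        moreover have "0 \<le> \<theta> * C" using th0 C0 by simp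
        ultimately show ?thesis using CB by (simp add: algebra_simps)
      qed
      then have "s * (C + \<theta> * Ps) \<le> s * ((1 + 2 * \<theta>) * Ps - (1 + \<theta>) * B)"
        using s0 by (intro mult_left_mono) auto
      then have "\<mu> + \<delta> \<le> s * (1 + 2 * \<theta>) * Ps - s * (1 + \<theta>) * B"
        unfolding mu \<delta>_def by (simp add: algebra_simps)
      then show "\<sigma> \<in> {\<sigma>. \<sigma> permutes {1..n} \<and> \<mu> + \<delta> < (\<Sum>t\<in>{1..N}. c (\<sigma> t))}"
        using lt sP unfolding P_def X_def by simp
    qed
    have ch: "real (card {\<sigma>. \<sigma> permutes {1..n} \<and> \<mu> + \<delta> < (\<Sum>t\<in>{1..N}. c (\<sigma> t))})
        \<le> real (card {\<sigma>. \<sigma> permutes {1..n}}) * exp (- (\<delta>^2 / (3 * a * M)))"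
    proof (rule chernoff_perm[OF Nn n_pos])
      show "\<And>i. i \<in> {1..n} \<Longrightarrow> 0 \<le> c i \<and> c i \<le> a" using c1 unfolding a_def by blast
      show "0 < a" unfolding a_def using gamma_pos Ps0 by simp
      show "\<mu> = real N / real n * sum c {1..n}" unfolding \<mu>_def ..
      show "\<mu> \<le> M" unfolding mu M_def using s0 CB B0 by (intro mult_left_mono) auto
      show "0 < \<delta>" unfolding \<delta>_def using s0 th0 Ps0 by simp
      show "\<delta> \<le> M" unfolding \<delta>_def M_def using s0 th1 Ps0 by (simp add: mult_le_cancel_left1)
    qed
    have ex: "\<delta>^2 / (3 * a * M) = \<epsilon>^2 / (6 * \<gamma>)"
    proof -
      have "\<delta>^2 / (3 * a * M) = (s * \<theta>^2) / (3 * \<gamma>)"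
        unfolding \<delta>_def a_def M_def using Ps0 s0 gamma_pos by (simp add: field_simps power2_eq_square)
      then show ?thesis unfolding sth by simp
    qed
    have finE: "finite {\<sigma>. \<sigma> permutes {1..n} \<and> \<mu> + \<delta> < (\<Sum>t\<in>{1..N}. c (\<sigma> t))}"
      by (rule finite_subset[OF _ finP]) (auto simp: P_def)
    have "real (card (P \<inter> E)) \<le> real (card {\<sigma>. \<sigma> permutes {1..n} \<and> \<mu> + \<delta> < (\<Sum>t\<in>{1..N}. c (\<sigma> t))})"
      using card_mono[OF finE sub] by simp
    also have "\<dots> \<le> real (card P) * exp (- (\<epsilon>^2 / (6 * \<gamma>)))" using ch ex unfolding P_def by simp
    finally have "real (card (P \<inter> E)) / real (card P) \<le> exp (- (\<epsilon>^2 / (6 * \<gamma>)))"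
      using finP neP by (simp add: divide_le_eq card_gt_0_iff mult.commute)
    then show ?thesis using goal_eq probE by simp
  qed
qed


end
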